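(* There is a countable collection of languages $\mathcal{L}$ for which no algorithm can identify in the limit, even when the adversary is restricted to enumerations (of the target, without noise or omissions) that are $M$-bounded displacement enumerations with respect to the target, for any $M>1$.
   Context: The universe is $U=\mathbb{N}$ with its natural order; a language is an infinite subset of $U$ with canonical enumeration $\ell_1<\ell_2<\cdots$; a collection is a countable family of languages. For $x\in U$, $\sigma(x,L)=j$ if $x=\ell_j$ and $0$ if $x\notin L$. A sequence $x_1,x_2,\dots$ is an $M$-bounded displacement enumeration with respect to $L$ if there is $n^\star$ with $\sigma(x_n,L)\le Mn$ for all $n\ge n^\star$. An enumeration of $K$ (without noise or omissions) lists every element of $K$ exactly once and nothing else. An identification algorithm outputs, after seeing $x_1,\dots,x_n$ (knowing $\mathcal{L}$ but not $K$), a language of $\mathcal{L}$; it identifies $K$ in the limit on an enumeration if there is $n^\star$ such that its output equals $K$ for all $n\ge n^\star$; it identifies $\mathcal{L}$ in the limit under a class of enumerations if it does so for every $K\in\mathcal{L}$ and every enumeration of $K$ in the class. *)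

theory Defs
  imports Complex_Main "HOL-Library.Infinite_Set" "HOL-Library.Countable_Set"
begin

text \<open>Languages are infinite subsets of nat; a collection is a countable, nonempty family
  of languages.  The canonical enumeration of L is enumerate L (0-based), so
  l_j = enumerate L (j - 1).\<close>

definition language_collection :: "nat set set \<Rightarrow> bool" where
  "language_collection C \<longleftrightarrow> countable C \<and> C \<noteq> {} \<and> (\<forall>L\<in>C. infinite L)"

definition sigma :: "nat \<Rightarrow> nat set \<Rightarrow> nat" where
  "sigma x L = (if x \<in> L then Suc (THE j. enumerate L j = x) else 0)"

text \<open>Sequences are 0-indexed: x i is the element x_(i+1) of the paper.\<close>
definition bounded_displacement :: "real \<Rightarrow> nat set \<Rightarrow> (nat \<Rightarrow> nat) \<Rightarrow> bool" where
  "bounded_displacement M L x \<longleftrightarrow>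
     (\<exists>n0. \<forall>n\<ge>n0. real (sigma (x (n - 1)) L) \<le> M * real n)"

definition enumeration_of :: "nat set \<Rightarrow> (nat \<Rightarrow> nat) \<Rightarrow> bool" where
  "enumeration_of K x \<longleftrightarrow> bij_betw x UNIV K"

definition identifies_in_limit :: "(nat list \<Rightarrow> nat set) \<Rightarrow> nat set \<Rightarrow> (nat \<Rightarrow> nat) \<Rightarrow> bool" where
  "identifies_in_limit G K x \<longleftrightarrow> (\<exists>n0. \<forall>n\<ge>n0. G (map x [0..<n]) = K)"

end

theory Submission
  imports Defs
begin

lemma sigma_le:
  assumes "infinite L" shows "sigma x L \<le> Suc x"
proof (cases "x \<in> L")
  case True
  then obtain j where j: "enumerate L j = x" using enumerate_Ex assms by blast
  have "(THE j. enumerate L j = x) = j"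
    using j inj_enumerate[OF assms] by (auto simp: inj_eq)
  then show ?thesis using True j le_enumerate[OF assms, of j] by (simp add: sigma_def)
qed (simp add: sigma_def)

lemma bd_general:
  assumes "infinite L" "(M::real) > 1" "\<And>m. z m \<le> Suc m"
  shows "bounded_displacement M L z"
proof -
  define n0 where "n0 = nat (ceiling (1 / (M - 1))) + 1"
  have "\<forall>n\<ge>n0. real (sigma (z (n - 1)) L) \<le> M * real n"
  proof (intro allI impI)
    fix n assume n: "n0 \<le> n"
    have n1: "n \<ge> 1" using n n0_def by simp
    have "sigma (z (n - 1)) L \<le> Suc (z (n - 1))" by (rule sigma_le[OF assms(1)])
    also have "\<dots> \<le> n + 1" using assms(3)[of "n-1"] n1 by simp
    finally have a: "real (sigma (z (n - 1)) L) \<le> real n + 1" by linarith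
    have "1 / (M - 1) \<le> real n" using n n0_def
      by (smt (verit, ccfv_SIG) of_nat_1 of_nat_add of_nat_le_iff of_nat_nat real_nat_ceiling_ge)
    then have "1 \<le> (M - 1) * real n" using assms(2) by (simp add: field_simps)
    then show "real (sigma (z (n - 1)) L) \<le> M * real n" using a by (simp add: algebra_simps)
  qed
  then show ?thesis unfolding bounded_displacement_def by blast
qed

definition yseq :: "nat list \<Rightarrow> nat \<Rightarrow> nat" where
  "yseq p n = (if n < length p then p ! n else n + 1)"

definition good :: "nat list \<Rightarrow> bool" where
  "good p \<longleftrightarrow> distinct p \<and> set p = {0..<length p} \<and> (\<forall>i<length p. p ! i \<le> Suc i)"

definition nxt :: "(nat list \<Rightarrow> nat set) \<Rightarrow> nat list \<Rightarrow> nat list" where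
  "nxt G p = (let t = SOME t. t > length p \<and> G (map (yseq p) [0..<t]) = - {length p}
              in map (yseq p) [0..<t] @ [length p])"

lemma yseq_bij:
  assumes "good p" shows "bij_betw (yseq p) UNIV (- {length p})"
proof -
  have inj: "inj (yseq p)"
  proof (rule injI)
    fix a b assume e: "yseq p a = yseq p b"
    show "a = b"
    proof (cases "a < length p"; cases "b < length p")
      assume "a < length p" "b < length p"
      then show ?thesis using e assms by (simp add: yseq_def good_def nth_eq_iff_index_eq)
    next
      assume "a < length p" "\<not> b < length p"
      then have "p ! a \<in> set p" by simp
      then show ?thesis using e assms \<open>\<not> b < length p\<close> \<open>a < length p\<close> by (auto simp: yseq_def good_def)
    next
      assume "\<not> a < length p" "b < length p"
      then have "p ! b \<in> set p" by simp
      then show ?thesis using e assms \<open>b < length p\<close> \<open>\<not> a < length p\<close> by (auto simp: yseq_def good_def)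
    next
      assume "\<not> a < length p" "\<not> b < length p"
      then show ?thesis using e by (simp add: yseq_def)
    qed
  qed
  have "range (yseq p) = - {length p}"
  proof
    show "range (yseq p) \<subseteq> - {length p}"
    proof
      fix v assume "v \<in> range (yseq p)"
      then obtain n where n: "v = yseq p n" by blast
      show "v \<in> - {length p}"
      proof (cases "n < length p")
        case True
        then have "p ! n \<in> set p" by simp
        then have "p ! n < length p" using assms by (simp add: good_def)
        then show ?thesis using n True by (auto simp: yseq_def)
      qed (use n in \<open>auto simp: yseq_def\<close>)
    qed
  next
    show "- {length p} \<subseteq> range (yseq p)"
    proof
      fix v assume v: "v \<in> - {length p}"
      show "v \<in> range (yseq p)"
      proof (cases "v < length p")
        case True
        then have "v \<in> set p" using assms by (simp add: good_def)
        then obtain i where "i < length p" "p ! i = v" by (auto simp: in_set_conv_nth)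
        then have "yseq p i = v" by (simp add: yseq_def)
        then show ?thesis by (metis rangeI)
      next
        case False
        then have "v > length p" using v by auto
        then have "\<not> v - 1 < length p" by linarith
        then have "yseq p (v - 1) = v" using \<open>v > length p\<close> by (simp add: yseq_def)
        then show ?thesis by (metis rangeI)
      qed
    qed
  qed
  then show ?thesis using inj by (simp add: bij_betw_def)
qed

lemma yseq_le: "good p \<Longrightarrow> yseq p m \<le> Suc m"
  by (auto simp: yseq_def good_def)

lemma nxt_props:
  assumes g: "good p" and ex: "\<exists>t. t > length p \<and> G (map (yseq p) [0..<t]) = - {length p}"
  shows "good (nxt G p) \<and> length (nxt G p) > length p \<and> take (length p) (nxt G p) = p \<and>
    (\<exists>t. length p < t \<and> t < length (nxt G p) \<and> G (take t (nxt G p)) = - {length p})"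
proof -
  define t where "t = (SOME t. t > length p \<and> G (map (yseq p) [0..<t]) = - {length p})"
  have t: "t > length p \<and> G (map (yseq p) [0..<t]) = - {length p}"
    unfolding t_def by (rule someI_ex[OF ex])
  define b where "b = length p"
  have q: "nxt G p = map (yseq p) [0..<t] @ [b]" unfolding nxt_def t_def b_def Let_def by simp
  have bij: "bij_betw (yseq p) UNIV (- {b})" using yseq_bij[OF g] b_def by simp
  have inj: "inj (yseq p)" using bij bij_betw_def by blast
  have d1: "distinct (map (yseq p) [0..<t])"
    by (simp add: distinct_map inj_on_subset[OF inj])
  have nb: "b \<notin> set (map (yseq p) [0..<t])" using bij by (auto simp: bij_betw_def)
  have st: "set (map (yseq p) [0..<t]) = {0..<t+1} - {b}"
  proof
    show "set (map (yseq p) [0..<t]) \<subseteq> {0..<t+1} - {b}"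
    proof -
      have "yseq p m < t + 1" if "m < t" for m using yseq_le[OF g, of m] that by simp
      then show ?thesis using nb by auto
    qed
  next
    show "{0..<t+1} - {b} \<subseteq> set (map (yseq p) [0..<t])"
    proof
      fix v assume v: "v \<in> {0..<t+1} - {b}"
      show "v \<in> set (map (yseq p) [0..<t])"
      proof (cases "v < b")
        case True
        then have "v \<in> set p" using g b_def by (simp add: good_def)
        then obtain i where i: "i < b" "p ! i = v" using b_def by (auto simp: in_set_conv_nth)
        then have "yseq p i = v" by (simp add: yseq_def b_def)
        then show ?thesis using i t b_def by auto
      next
        case False
        then have "v > b" "v \<le> t" using v by auto
        then have "yseq p (v - 1) = v" "v - 1 < t" by (auto simp: yseq_def b_def)
        then show ?thesis by (metis atLeastLessThan_iff image_eqI le0 set_map set_upt)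
      qed
    qed
  qed
  have bt: "b < t + 1" using t b_def by simp
  have good': "good (nxt G p)"
    unfolding good_def q
  proof (intro conjI)
    show "distinct (map (yseq p) [0..<t] @ [b])" using d1 nb by simp
    show "set (map (yseq p) [0..<t] @ [b]) = {0..<length (map (yseq p) [0..<t] @ [b])}"
      using st bt by auto
    show "\<forall>i<length (map (yseq p) [0..<t] @ [b]). (map (yseq p) [0..<t] @ [b]) ! i \<le> Suc i"
    proof (intro allI impI)
      fix i assume "i < length (map (yseq p) [0..<t] @ [b])"
      then have "i < t \<or> i = t" by auto
      then show "(map (yseq p) [0..<t] @ [b]) ! i \<le> Suc i"
      proof
        assume "i < t" then show ?thesis using yseq_le[OF g] by (simp add: nth_append)
      next
        assume "i = t" then show ?thesis using bt by (simp add: nth_append)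
      qed
    qed
  qed
  have tk: "take (length p) (nxt G p) = p"
  proof -
    have "take b (map (yseq p) [0..<t]) = map (yseq p) [0..<b]"
      using t b_def by (simp add: take_map)
    also have "\<dots> = p" by (rule nth_equalityI) (auto simp: yseq_def b_def)
    finally show ?thesis using t b_def q by simp
  qed
  have "G (take t (nxt G p)) = - {length p}" using t q by simp
  then show ?thesis using good' tk t q by auto
qed

definition stage :: "(nat list \<Rightarrow> nat set) \<Rightarrow> nat \<Rightarrow> nat list" where
  "stage G k = (nxt G ^^ k) []"

lemma stage_Suc: "stage G (Suc k) = nxt G (stage G k)"
  by (simp add: stage_def)

theorem theorem7p7:
  shows "\<exists>C. language_collection C \<and>
    (\<forall>M::real. M > 1 \<longrightarrow>
       \<not> (\<exists>G. (\<forall>xs. G xs \<in> C) \<and>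
              (\<forall>K\<in>C. \<forall>x. enumeration_of K x \<and> bounded_displacement M K x
                     \<longrightarrow> identifies_in_limit G K x)))"
proof (intro exI conjI allI impI notI)
  define C where "C = insert (UNIV::nat set) (range (\<lambda>b. - {b}))"
  show "language_collection C"
    unfolding language_collection_def C_def
  proof (intro conjI ballI)
    fix L assume "L \<in> insert (UNIV::nat set) (range (\<lambda>b. - {b}))"
    then show "infinite L" by (auto simp: Compl_eq_Diff_UNIV)
  qed auto
  fix M :: real assume M: "M > 1"
  assume "\<exists>G. (\<forall>xs. G xs \<in> C) \<and>
              (\<forall>K\<in>C. \<forall>x. enumeration_of K x \<and> bounded_displacement M K x
                     \<longrightarrow> identifies_in_limit G K x)"
  then obtain G where G: "\<And>K x. K \<in> C \<Longrightarrow> enumeration_of K x \<Longrightarrow> bounded_displacement M K x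
                     \<Longrightarrow> identifies_in_limit G K x" by blast
  have ex: "\<exists>t. t > length p \<and> G (map (yseq p) [0..<t]) = - {length p}" if g: "good p" for p
  proof -
    have inf: "infinite (- {length p})" by (simp add: Compl_eq_Diff_UNIV)
    have "identifies_in_limit G (- {length p}) (yseq p)"
      using G[of "- {length p}" "yseq p"] yseq_bij[OF g] bd_general[OF inf M yseq_le[OF g]]
      by (auto simp: C_def enumeration_of_def)
    then obtain n0 where n0: "\<forall>n\<ge>n0. G (map (yseq p) [0..<n]) = - {length p}"
      by (auto simp: identifies_in_limit_def)
    show ?thesis using n0 by (intro exI[of _ "max n0 (Suc (length p))"]) auto
  qed
  have P: "good (stage G k) \<and> length (stage G k) \<ge> k" for k
  proof (induction k)
    case 0 then show ?case by (simp add: stage_def good_def)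
  next
    case (Suc k)
    then have P_ih: "good (stage G k)" by simp
    show ?case using Suc nxt_props[OF P_ih ex[OF P_ih]] by (simp add: stage_Suc)
  qed
  have stepk: "length (stage G k) < length (stage G (Suc k)) \<and>
      take (length (stage G k)) (stage G (Suc k)) = stage G k \<and>
      (\<exists>t. length (stage G k) < t \<and> t < length (stage G (Suc k)) \<and>
         G (take t (stage G (Suc k))) \<noteq> UNIV)" for k
    using nxt_props[OF conjunct1[OF P[of k]] ex[OF conjunct1[OF P[of k]]]] by (auto simp: stage_Suc)
  have pref: "take (length (stage G k)) (stage G (k + d)) = stage G k" for k d
  proof (induction d)
    case 0 then show ?case by simp
  next
    case (Suc d)
    have "take (length (stage G k)) (stage G (k + Suc d))
       = take (length (stage G k)) (take (length (stage G (k + d))) (stage G (Suc (k + d))))"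
    proof -
      have "length (stage G k) \<le> length (stage G (k + d))"
        using Suc by (metis length_take min.bounded_iff nle_le)
      then show ?thesis by simp
    qed
    also have "\<dots> = stage G k" using stepk[of "k + d"] Suc by simp
    finally show ?case .
  qed
  have nth_eq: "stage G k ! m = stage G k' ! m" if "m < length (stage G k)" "m < length (stage G k')" for k k' m
  proof -
    have a: "stage G k ! m = stage G (max k k') ! m"
      using pref[of k "max k k' - k"] that(1) by (metis le_add_diff_inverse max.cobounded1 nth_take)
    have b: "stage G k' ! m = stage G (max k k') ! m"
      using pref[of k' "max k k' - k'"] that(2) by (metis le_add_diff_inverse max.cobounded2 nth_take)
    show ?thesis using a b by simp
  qed
  define x where "x m = stage G (Suc m) ! m" for m
  have xk: "x m = stage G k ! m" if "m < length (stage G k)" for m k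
    unfolding x_def using nth_eq[of m "Suc m" k] that P[of "Suc m"] by simp
  have mapx: "map x [0..<n] = take n (stage G k)" if "n \<le> length (stage G k)" for n k
    by (rule nth_equalityI) (use that xk in auto)
  have bij: "bij_betw x UNIV UNIV"
  proof -
    have "inj x"
    proof (rule injI)
      fix a b assume e: "x a = x b"
      let ?k = "Suc (a + b)"
      have la: "a < length (stage G ?k)" "b < length (stage G ?k)" using P[of ?k] by auto
      have "distinct (stage G ?k)" using P[of ?k] by (simp add: good_def)
      then show "a = b" using e xk[OF la(1)] xk[OF la(2)] la by (simp add: nth_eq_iff_index_eq)
    qed
    moreover have "surj x"
    proof -
      have "v \<in> range x" for v
      proof -
        have l: "v < length (stage G (Suc v))" using P[of "Suc v"] by simp
        then have "v \<in> set (stage G (Suc v))" using P[of "Suc v"] by (simp add: good_def)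
        then obtain i where "i < length (stage G (Suc v))" "stage G (Suc v) ! i = v"
          by (auto simp: in_set_conv_nth)
        then show ?thesis using xk by (metis rangeI)
      qed
      then show ?thesis by blast
    qed
    ultimately show ?thesis by (simp add: bij_betw_def)
  qed
  have xle: "x m \<le> Suc m" for m
    using P[of "Suc m"] by (simp add: x_def good_def)
  have "identifies_in_limit G UNIV x"
    using G[of UNIV x] bij bd_general[OF _ M xle] by (simp add: C_def enumeration_of_def)
  then obtain n0 where n0: "\<forall>n\<ge>n0. G (map x [0..<n]) = UNIV" by (auto simp: identifies_in_limit_def)
  obtain t where t: "length (stage G n0) < t" "t < length (stage G (Suc n0))"
      "G (take t (stage G (Suc n0))) \<noteq> UNIV" using stepk[of n0] by blast
  have "G (map x [0..<t]) \<noteq> UNIV" using t mapx[of t "Suc n0"] by simp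
  moreover have "t \<ge> n0" using t(1) P[of n0] by simp
  ultimately show False using n0 by blast
qed

end
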